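(* Let $T\ge1$ and $d_1,\dots,d_T\in\{0,1,2,\dots\}$. For $t\in[T]$ let $m_t=\{\tau\in[t-1]:\tau+d_\tau\ge t\}$, let $\sigma_{\max}=\max_{t\in[T]}|m_t|$, and for $S\subseteq[T]$ let $\sigma_{\max}^S=\max_{\tau\in[T]}|m_\tau\cap S|$ and $\bar S=[T]\setminus S$. Then $$\sigma_{\max}=\min_{S\subseteq[T]}\left(|S|+\sigma_{\max}^{\bar S}\right).$$
   Context: $[k]=\{1,\dots,k\}$, $[0]=\emptyset$. *)

theory Defs
  imports Main
begin

definition mset_delay :: "(nat \<Rightarrow> nat) \<Rightarrow> nat \<Rightarrow> nat set" where
  "mset_delay d t = {\<tau> \<in> {1..t - 1}. \<tau> + d \<tau> \<ge> t}"

definition sigma_max :: "nat \<Rightarrow> (nat \<Rightarrow> nat) \<Rightarrow> nat" where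
  "sigma_max T d = Max ((\<lambda>t. card (mset_delay d t)) ` {1..T})"

definition sigma_max_on :: "nat \<Rightarrow> (nat \<Rightarrow> nat) \<Rightarrow> nat set \<Rightarrow> nat" where
  "sigma_max_on T d S = Max ((\<lambda>\<tau>. card (mset_delay d \<tau> \<inter> S)) ` {1..T})"

end

theory Submission
  imports Defs
begin

lemma msub: "t \<le> T \<Longrightarrow> mset_delay d t \<subseteq> {1..T}"
  unfolding mset_delay_def by auto

lemma mfin: "finite (mset_delay d t)"
  unfolding mset_delay_def by auto

theorem lemmaA8:
  fixes T :: nat and d :: "nat \<Rightarrow> nat"
  assumes "T \<ge> 1"
  shows "sigma_max T d =
    Min ((\<lambda>S. card S + sigma_max_on T d ({1..T} - S)) ` Pow {1..T})"
proof (rule sym, rule Min_eqI)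
  show "finite ((\<lambda>S. card S + sigma_max_on T d ({1..T} - S)) ` Pow {1..T})" by simp
next
  have "sigma_max_on T d ({1..T} - {}) = sigma_max T d"
    unfolding sigma_max_on_def sigma_max_def
  proof (rule arg_cong[where f=Max], rule image_cong[OF refl])
    fix t assume "t \<in> {1..T}"
    then have "mset_delay d t \<inter> ({1..T} - {}) = mset_delay d t" using msub[of t T d] by auto
    then show "card (mset_delay d t \<inter> ({1..T} - {})) = card (mset_delay d t)" by simp
  qed
  then show "sigma_max T d \<in> (\<lambda>S. card S + sigma_max_on T d ({1..T} - S)) ` Pow {1..T}"
    by (metis (no_types, lifting) Pow_bottom add_0 card.empty image_eqI)
next
  fix y assume "y \<in> (\<lambda>S. card S + sigma_max_on T d ({1..T} - S)) ` Pow {1..T}"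
  then obtain S where S: "S \<subseteq> {1..T}" and y: "y = card S + sigma_max_on T d ({1..T} - S)" by auto
  have ne: "(\<lambda>t. card (mset_delay d t)) ` {1..T} \<noteq> {}" using assms by auto
  obtain t where t: "t \<in> {1..T}" and sm: "sigma_max T d = card (mset_delay d t)"
    using Max_in[OF _ ne] unfolding sigma_max_def by auto
  let ?m = "mset_delay d t"
  have "?m \<subseteq> (?m \<inter> S) \<union> (?m \<inter> ({1..T} - S))" using msub[of t T d] t by auto
  then have "card ?m \<le> card ((?m \<inter> S) \<union> (?m \<inter> ({1..T} - S)))"
    by (intro card_mono) (auto simp: mfin)
  also have "\<dots> \<le> card (?m \<inter> S) + card (?m \<inter> ({1..T} - S))" by (rule card_Un_le)
  also have "card (?m \<inter> S) \<le> card S"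
    using S by (intro card_mono) (auto intro: finite_subset)
  also have "card (?m \<inter> ({1..T} - S)) \<le> sigma_max_on T d ({1..T} - S)"
    unfolding sigma_max_on_def using t by (intro Max_ge) auto
  finally show "sigma_max T d \<le> y" using sm y by simp
qed

end
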